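(* Let $R\in\mathbb N$, let $I=\{n\in\mathbb Z : 1\leqslant n\leqslant R\}$, let $a_n\in\mathbb C$ for $n\in I$, and let $\lambda_n\in\mathbb R$ ($n\in I$) satisfy $$|\lambda_n-\lambda_m|\geqslant \gamma>\sqrt{\tfrac{1}{3}+\tfrac{\pi^2}{12}}\quad\text{for all } n,m\in I \text{ with } n\neq m.$$ Define $f(t)=\sum_{n\in I}a_n\operatorname{sinc}(t-\lambda_n)$ for $t\in\mathbb R$. Then $$E_f\geqslant \left(1-\gamma^{-1}\sqrt{\tfrac{1}{3}+\tfrac{\pi^2}{12}}\right)\sum_{n\in I}|a_n|^2.$$
   Context: The sinc function is $\operatorname{sinc}(\alpha)=\frac{\sin(\pi\alpha)}{\pi\alpha}$ for $\alpha\neq 0$ and $\operatorname{sinc}(0)=1$. The energy of a signal $f:\mathbb R\to\mathbb C$ is $E_f=\int_{-\infty}^{\infty}|f(t)|^2\,dt$. *)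

theory Defs
  imports "HOL-Analysis.Analysis"
begin

definition sinc :: "real \<Rightarrow> real" where
  "sinc a = (if a = 0 then 1 else sin (pi * a) / (pi * a))"

definition energy :: "(real \<Rightarrow> complex) \<Rightarrow> ennreal" where
  "energy f = (\<integral>\<^sup>+ t. ennreal ((cmod (f t))\<^sup>2) \<partial>lborel)"

end

theory Submission
  imports "HOL-Probability.Sinc_Integral" Defs
begin

lemma sinc_alt: "sinc x = Sinc_Integral.sinc (pi * x)"
  by (simp add: sinc_def)

lemma isCont_sinc': "isCont sinc x"
proof -
  have "isCont (\<lambda>x. Sinc_Integral.sinc (pi * x)) x"
    by (intro continuous_within_compose3[OF isCont_sinc]) (auto intro: continuous_intros)
  moreover have "sinc = (\<lambda>x. Sinc_Integral.sinc (pi * x))" by (rule ext) (simp add: sinc_alt)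
  ultimately show ?thesis by simp
qed

lemma sinc_zero [simp]: "sinc 0 = 1" by (simp add: sinc_def)

lemma sinc_even: "sinc (- x) = sinc x"
  by (simp add: sinc_def)

lemma abs_sinc_le1: "\<bar>sinc x\<bar> \<le> 1"
proof (cases "x = 0")
  case False
  have "\<bar>sin (pi * x)\<bar> \<le> \<bar>pi * x\<bar>" by (rule abs_sin_x_le_abs_x)
  then show ?thesis using False by (simp add: sinc_def abs_divide divide_le_eq_1)
qed simp

lemma abs_sinc_le: assumes "x \<noteq> 0" shows "\<bar>sinc x\<bar> \<le> 1 / (pi * \<bar>x\<bar>)"
proof -
  have "\<bar>sin (pi * x)\<bar> \<le> 1" by simp
  then show ?thesis using assms by (simp add: sinc_def abs_divide abs_mult divide_right_mono)
qed

lemma sinc_nz: "x \<noteq> 0 \<Longrightarrow> sinc x = sin (pi * x) / (pi * x)"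
  by (simp add: sinc_def)

lemma DERIV_usinc2: "((\<lambda>u. u * (sinc u)\<^sup>2) has_real_derivative (2 * sinc (2* u) - (sinc u)\<^sup>2)) (at u)"
proof (cases "u = 0")
  case True
  have "((\<lambda>y. (sinc y)\<^sup>2) \<longlongrightarrow> (sinc 0)\<^sup>2) (at 0)"
    by (intro tendsto_intros isCont_tendsto_compose[OF isCont_sinc'])
  then have L: "((\<lambda>y. (sinc y)\<^sup>2) \<longlongrightarrow> 1) (at 0)" by simp
  have "\<forall>\<^sub>F y in at 0. (sinc y)\<^sup>2 = (y * (sinc y)\<^sup>2 - 0 * (sinc 0)\<^sup>2) / (y - 0)"
    by (auto simp: eventually_at_filter)
  from tendsto_cong[OF this] L
  have "((\<lambda>y. (y * (sinc y)\<^sup>2 - 0 * (sinc 0)\<^sup>2) / (y - 0)) \<longlongrightarrow> 1) (at 0)" by simp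
  then show ?thesis using True by (simp add: has_field_derivative_iff)
next
  case False
  let ?g = "\<lambda>v. (sin (pi * v))\<^sup>2 / (pi\<^sup>2 * v)"
  have d: "(?g has_real_derivative (2 * sinc (2* u) - (sinc u)\<^sup>2)) (at u)"
  proof -
    have "(?g has_real_derivative ((2 * sin (pi* u) * (cos (pi* u) * pi)) * (pi\<^sup>2 * u) - (sin (pi* u))\<^sup>2 * pi\<^sup>2) / (pi\<^sup>2 * u)\<^sup>2) (at u)"
      using False by (auto intro!: derivative_eq_intros simp: power2_eq_square)
    moreover have "((2 * sin (pi* u) * (cos (pi* u) * pi)) * (pi\<^sup>2 * u) - (sin (pi* u))\<^sup>2 * pi\<^sup>2) / (pi\<^sup>2 * u)\<^sup>2
        = 2 * sinc (2* u) - (sinc u)\<^sup>2"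
    proof -
      have s2: "sin (pi * (2* u)) = 2 * sin(pi* u) * cos(pi* u)" using sin_double[of "pi* u"]
        by (simp add: algebra_simps)
      have s2': "sin (pi * (u*2)) = 2 * sin(pi* u) * cos(pi* u)" using s2 by (simp add: mult.commute)
      show ?thesis using False by (simp add: sinc_nz s2 s2' field_simps power2_eq_square)
    qed
    ultimately show ?thesis by simp
  qed
  show ?thesis
    by (rule has_field_derivative_transform_within_open[OF d, where S="-{0}"])
       (use False in \<open>auto simp: sinc_nz field_simps power2_eq_square\<close>)
qed

lemma einterval_UNIV: "einterval (-\<infinity>) \<infinity> = (UNIV :: real set)"
  by (auto simp: einterval_iff)

lemma LBINT_UNIV: "interval_lebesgue_integral lborel (-\<infinity>) \<infinity> f = integral\<^sup>L lborel (f :: real \<Rightarrow> real)"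
  by (simp add: interval_lebesgue_integral_def einterval_UNIV set_lebesgue_integral_def)

lemma set_integrable_UNIV: "set_integrable lborel (einterval (-\<infinity>) \<infinity>) f \<longleftrightarrow> integrable lborel (f :: real \<Rightarrow> real)"
  by (simp add: set_integrable_def einterval_UNIV)

lemma DERIV_Si2: "((\<lambda>v. Si (2* pi* v)) has_real_derivative (2* pi * sinc (2* v))) (at v)"
proof -
  have "((\<lambda>v. Si (2* pi* v)) has_real_derivative (Sinc_Integral.sinc (2* pi* v) * (2* pi))) (at v)"
    by (rule DERIV_chain2[OF DERIV_Si]) (auto intro!: derivative_eq_intros)
  moreover have "Sinc_Integral.sinc (2* pi* v) = sinc (2* v)" by (simp add: sinc_alt mult.assoc mult.left_commute)
  ultimately show ?thesis by (simp add: mult.commute)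
qed

lemma Si2_top: "((\<lambda>v. Si (2* pi* v)) \<longlongrightarrow> pi/2) at_top"
  by (rule filterlim_compose[OF Si_at_top]) (auto intro!: filterlim_tendsto_pos_mult_at_top filterlim_ident)

lemma Si2_bot: "((\<lambda>v. Si (2* pi* v)) \<longlongrightarrow> - (pi/2)) at_bot"
proof -
  have "((\<lambda>v. - Si (2* pi* (-v))) \<longlongrightarrow> - (pi/2)) at_bot"
    by (intro tendsto_intros filterlim_compose[OF Si2_top]) (simp add: filterlim_uminus_at_top filterlim_ident)
  moreover have "\<forall>\<^sub>F v in at_bot. - Si (2* pi* (-v)) = Si (2* pi* v)"
  proof -
    have "\<forall>\<^sub>F v in at_bot. v \<le> (0::real)" by (rule eventually_le_at_bot)
    then show ?thesis
    proof (rule eventually_mono)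
      fix v :: real assume "v \<le> 0"
      then have "Si (- (2* pi* (-v))) = - Si (2* pi* (-v))" by (intro Si_neg) (simp add: mult_nonneg_nonpos mult_nonneg_nonpos2)
      then show "- Si (2* pi* (-v)) = Si (2* pi* v)" by simp
    qed
  qed
  ultimately show ?thesis using tendsto_cong by fastforce
qed

lemma usinc2_bound: "\<bar>u * (sinc u)\<^sup>2\<bar> \<le> 1 / (pi\<^sup>2 * \<bar>u\<bar>)" if "u \<noteq> 0"
proof -
  have "\<bar>sinc u\<bar>\<^sup>2 \<le> (1 / (pi * \<bar>u\<bar>))\<^sup>2"
    by (intro power_mono abs_sinc_le that) simp
  then have "\<bar>u\<bar> * \<bar>sinc u\<bar>\<^sup>2 \<le> \<bar>u\<bar> * (1 / (pi * \<bar>u\<bar>))\<^sup>2"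
    by (intro mult_left_mono) auto
  also have "\<dots> = 1 / (pi\<^sup>2 * \<bar>u\<bar>)" using that by (simp add: power2_eq_square field_simps)
  finally show ?thesis by (simp add: abs_mult power2_abs)
qed

lemma usinc2_lim: "((\<lambda>u. u * (sinc u)\<^sup>2) \<longlongrightarrow> 0) at_infinity"
proof (rule Lim_null_comparison)
  show "\<forall>\<^sub>F u in at_infinity. norm (u * (sinc u)\<^sup>2) \<le> (1/pi\<^sup>2) * norm (inverse u)"
    using eventually_at_infinity[of "\<lambda>u. norm (u * (sinc u)\<^sup>2) \<le> (1/pi\<^sup>2) * norm (inverse u)"]
    using usinc2_bound by (force intro!: exI[of _ 1] simp: field_simps abs_inverse)
  show "((\<lambda>u. (1/pi\<^sup>2) * norm (inverse (u::real))) \<longlongrightarrow> 0) at_infinity"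
    by (intro tendsto_mult_right_zero tendsto_norm_zero tendsto_inverse_0)
qed

lemma sinc_sq_integral:
  "integrable lborel (\<lambda>t. (sinc (t - x))\<^sup>2) \<and> integral\<^sup>L lborel (\<lambda>t. (sinc (t - x))\<^sup>2) = 1"
proof -
  define F where "F t = Si (2* pi* (t-x)) / pi - (t-x) * (sinc (t-x))\<^sup>2" for t
  have D: "(F has_real_derivative (sinc (t - x))\<^sup>2) (at t)" for t
  proof -
    have d1: "((\<lambda>t. Si (2 * pi * (t - x))) has_real_derivative 2 * pi * sinc (2 * (t - x)) * 1) (at t)"
      by (rule DERIV_chain2[OF DERIV_Si2, of "\<lambda>t. t - x"]) (auto intro!: derivative_eq_intros)
    have d2: "((\<lambda>t. (t - x) * (sinc (t - x))\<^sup>2) has_real_derivative (2 * sinc (2 * (t-x)) - (sinc (t-x))\<^sup>2) * 1) (at t)"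
      by (rule DERIV_chain2[OF DERIV_usinc2, of "\<lambda>t. t - x"]) (auto intro!: derivative_eq_intros)
    have "(F has_real_derivative (2 * pi * sinc (2 * (t-x)) * 1 / pi - (2 * sinc (2 * (t-x)) - (sinc (t-x))\<^sup>2) * 1)) (at t)"
      unfolding F_def by (intro derivative_intros DERIV_cdivide d1 d2)
    then show ?thesis by simp
  qed
  have C: "isCont (\<lambda>t. (sinc (t - x))\<^sup>2) t" for t
    by (intro continuous_intros isCont_o2[OF _ isCont_sinc']) 
  have tx_top: "filterlim (\<lambda>t. t - x) at_top at_top"
    using filterlim_tendsto_add_at_top[OF tendsto_const[of "-x"] filterlim_ident] by simp
  have tx_bot: "filterlim (\<lambda>t. t - x) at_bot at_bot"
    unfolding filterlim_at_bot
  proof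
    fix Z :: real
    show "\<forall>\<^sub>F t in at_bot. t - x \<le> Z"
      using eventually_le_at_bot[of "Z + x"] by (rule eventually_mono) simp
  qed
  have L1: "(F \<longlongrightarrow> (pi/2)/pi - 0) at_top"
    unfolding F_def
    by (intro tendsto_intros filterlim_compose[OF Si2_top tx_top]
              filterlim_compose[OF usinc2_lim] filterlim_mono[OF tx_top at_top_le_at_infinity order_refl]) simp
  have L2: "(F \<longlongrightarrow> (-(pi/2))/pi - 0) at_bot"
    unfolding F_def
    by (intro tendsto_intros filterlim_compose[OF Si2_bot tx_bot]
              filterlim_compose[OF usinc2_lim] filterlim_mono[OF tx_bot at_bot_le_at_infinity order_refl]) simp
  have *: "set_integrable lborel (einterval (-\<infinity>) \<infinity>) (\<lambda>t. (sinc (t - x))\<^sup>2)"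
       "(LBINT t=-\<infinity>..\<infinity>. (sinc (t - x))\<^sup>2) = (pi/2)/pi - 0 - ((-(pi/2))/pi - 0)"
    by (rule interval_integral_FTC_nonneg[where F=F, OF _ D C _ _ _];
        use L1 L2 in \<open>simp add: ereal_tendsto_simps1\<close>)+
  then show ?thesis by (simp add: set_integrable_def LBINT_UNIV)
qed

lemma alg:
  fixes A B C D p q k :: real
  assumes "A\<^sup>2 + B\<^sup>2 = 1" "C\<^sup>2 + D\<^sup>2 = 1" "p \<noteq> 0" "q \<noteq> 0" "p \<noteq> q" "k \<noteq> 0"
  shows "A / (k * p) * (C / (k * q)) = 1 / (k * (p - q)) * ((B * D + A * C) * (C * (C / (k * q)) - A * (A / (k * p)))
          + (A * D - B * C) * ((2 * C * D) / (2 * k * q) + (2 * A * B) / (2 * k * p)))"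
proof -
  have pq: "p - q \<noteq> 0" using assms by simp
  have e: "(B * D + A * C) * (C * C * p - A * A * q) + (A * D - B * C) * (C * D * p + A * B * q) = A * C * (p - q)"
  proof -
    have "(B * D + A * C) * (C * C * p - A * A * q) + (A * D - B * C) * (C * D * p + A * B * q)
        = A * C * p * (C\<^sup>2 + D\<^sup>2) - A * C * q * (A\<^sup>2 + B\<^sup>2)"
      by (simp add: algebra_simps power2_eq_square)
    then show ?thesis using assms by (simp add: algebra_simps)
  qed
  have i1: "C * (C / (k * q)) - A * (A / (k * p)) = (C * C * p - A * A * q) / (k * p * q)"
    using assms by (simp add: field_simps)
  have i2: "(2 * C * D) / (2 * k * q) + (2 * A * B) / (2 * k * p) = (C * D * p + A * B * q) / (k * p * q)"
    using assms by (simp add: field_simps)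
  have "1 / (k * (p - q)) * ((B * D + A * C) * (C * (C / (k * q)) - A * (A / (k * p)))
          + (A * D - B * C) * ((2 * C * D) / (2 * k * q) + (2 * A * B) / (2 * k * p)))
      = 1 / (k * (p - q)) * (((B * D + A * C) * (C * C * p - A * A * q) + (A * D - B * C) * (C * D * p + A * B * q)) / (k * p * q))"
    using assms pq by (simp only: i1 i2) (simp add: field_simps)
  also have "\<dots> = 1 / (k * (p - q)) * (A * C * (p - q) / (k * p * q))" unfolding e ..
  also have "\<dots> = A / (k * p) * (C / (k * q))" using assms pq by (simp add: field_simps)
  finally show ?thesis ..
qed
definition hfun :: "real \<Rightarrow> real" where "hfun w = sin (pi * w) * sinc w"

lemma sinc_2: "sinc (2 * q) = (if q = 0 then 1 else (2 * sin (pi * q) * cos (pi * q)) / (2 * pi * q))"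
  using sin_double[of "pi * q"] by (simp add: sinc_def algebra_simps)

lemma prod_identity:
  assumes "p \<noteq> q"
  shows "sinc p * sinc q = 1 / (pi * (p - q)) * (cos (pi * (p - q)) * (hfun q - hfun p)
           + sin (pi * (p - q)) * (sinc (2 * q) + sinc (2 * p)))"
proof -
  have cd: "cos (pi * (p - q)) = cos (pi * p) * cos (pi * q) + sin (pi * p) * sin (pi * q)"
    using cos_diff[of "pi * p" "pi * q"] by (simp add: right_diff_distrib)
  have sd: "sin (pi * (p - q)) = sin (pi * p) * cos (pi * q) - cos (pi * p) * sin (pi * q)"
    using sin_diff[of "pi * p" "pi * q"] by (simp add: right_diff_distrib)
  consider "p = 0" | "q = 0" | "p \<noteq> 0" "q \<noteq> 0" using assms by blast
  then show ?thesis
  proof cases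
    case 1
    then have q: "q \<noteq> 0" using assms by simp
    have "(cos (pi * q))\<^sup>2 + (sin (pi * q))\<^sup>2 = 1" by simp
    moreover have "sinc (2 * q) = 2 * sin (pi * q) * cos (pi * q) / (2 * pi * q)" using q by (simp add: sinc_2)
    ultimately show ?thesis using 1 q
      by (simp add: hfun_def sinc_nz[OF q] field_simps power2_eq_square)
  next
    case 2
    then have p: "p \<noteq> 0" using assms by simp
    have "(cos (pi * p))\<^sup>2 + (sin (pi * p))\<^sup>2 = 1" by simp
    moreover have "sinc (2 * p) = 2 * sin (pi * p) * cos (pi * p) / (2 * pi * p)" using p by (simp add: sinc_2)
    ultimately show ?thesis using 2 p
      by (simp add: hfun_def sinc_nz[OF p] field_simps power2_eq_square)
  next
    case 3
    have "sinc p * sinc q = sin (pi * p) / (pi * p) * (sin (pi * q) / (pi * q))"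
      using 3 by (simp add: sinc_nz)
    also have "\<dots> = 1 / (pi * (p - q)) * ((cos (pi * p) * cos (pi * q) + sin (pi * p) * sin (pi * q)) *
         (sin (pi * q) * (sin (pi * q) / (pi * q)) - sin (pi * p) * (sin (pi * p) / (pi * p))) +
         (sin (pi * p) * cos (pi * q) - cos (pi * p) * sin (pi * q)) *
         (2 * sin (pi * q) * cos (pi * q) / (2 * pi * q) + 2 * sin (pi * p) * cos (pi * p) / (2 * pi * p)))"
      by (rule alg) (use 3 assms in auto)
    also have "\<dots> = 1 / (pi * (p - q)) * (cos (pi * (p - q)) * (hfun q - hfun p)
           + sin (pi * (p - q)) * (sinc (2 * q) + sinc (2 * p)))"
    proof -
      have a: "sinc (2 * q) = 2 * sin (pi * q) * cos (pi * q) / (2 * pi * q)" using 3 by (simp add: sinc_2)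
      have b: "sinc (2 * p) = 2 * sin (pi * p) * cos (pi * p) / (2 * pi * p)" using 3 by (simp add: sinc_2)
      show ?thesis unfolding cd sd hfun_def a b using 3 by (simp add: sinc_nz[OF 3(1)] sinc_nz[OF 3(2)])
    qed
    finally show ?thesis .
  qed
qed

lemma shift_top: "filterlim (\<lambda>t. t - x) at_top (at_top :: real filter)"
  using filterlim_tendsto_add_at_top[OF tendsto_const[of "-x"] filterlim_ident] by simp

lemma shift_bot: "filterlim (\<lambda>t. t - x) at_bot (at_bot :: real filter)"
  unfolding filterlim_at_bot
proof
  fix Z :: real
  show "\<forall>\<^sub>F t in at_bot. t - x \<le> Z"
    using eventually_le_at_bot[of "Z + x"] by (rule eventually_mono) simp
qed

lemma borel_measurable_sinc' [measurable]: "sinc \<in> borel_measurable borel"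
  by (intro borel_measurable_continuous_onI continuous_at_imp_continuous_on ballI isCont_sinc')

lemma DERIV_LBINT0:
  fixes f :: "real \<Rightarrow> real"
  assumes "\<And>x. isCont f x"
  shows "((\<lambda>v. LBINT w=0..v. f w) has_real_derivative f x) (at x)"
proof -
  have "(at x within {min 0 (x - 1)..max 0 (x + 1)}) = at x"
    by (intro at_within_interior) auto
  moreover have "min 0 (x - 1) \<le> x" "x \<le> max 0 (x + 1)"
    by auto
  ultimately show ?thesis
    using interval_integral_FTC2[of "min 0 (x - 1)" 0 "max 0 (x + 1)" f x]
    by (auto simp: continuous_at_imp_continuous_on assms zero_ereal_def
                   has_real_derivative_iff_has_vector_derivative
             split del: if_split)
qed

lemma isCont_hfun: "isCont hfun x"
  unfolding hfun_def[abs_def] by (intro continuous_intros isCont_sinc')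

lemma hfun_bound: "w \<noteq> 0 \<Longrightarrow> \<bar>hfun w\<bar> \<le> 1 / (pi * \<bar>w\<bar>)"
proof -
  assume w: "w \<noteq> 0"
  have "\<bar>hfun w\<bar> = \<bar>sin (pi * w)\<bar> * \<bar>sinc w\<bar>" by (simp add: hfun_def abs_mult)
  also have "\<dots> \<le> 1 * (1 / (pi * \<bar>w\<bar>))"
    by (intro mult_mono abs_sinc_le w) auto
  finally show ?thesis by simp
qed

definition Phi :: "real \<Rightarrow> real" where "Phi v = (LBINT w=0..v. hfun w)"

lemma DERIV_Phi: "(Phi has_real_derivative hfun x) (at x)"
  unfolding Phi_def[abs_def] by (rule DERIV_LBINT0[OF isCont_hfun])

lemma Phi_diff_bound_aux:
  assumes "L > 0" "p < q" "(L \<le> p \<and> L \<le> q) \<or> (p \<le> -L \<and> q \<le> -L)"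
  shows "\<bar>Phi q - Phi p\<bar> \<le> \<bar>q - p\<bar> / (pi * L)"
proof -
  obtain z where z: "p < z" "z < q" "Phi q - Phi p = (q - p) * hfun z"
    using MVT2[OF assms(2), of Phi hfun] DERIV_Phi by blast
  have zL: "L \<le> \<bar>z\<bar>" using z assms by auto
  have "\<bar>hfun z\<bar> \<le> 1 / (pi * \<bar>z\<bar>)" using zL assms(1) by (intro hfun_bound) auto
  also have "\<dots> \<le> 1 / (pi * L)" using zL assms(1) by (intro divide_left_mono mult_left_mono) auto
  finally have "\<bar>q - p\<bar> * \<bar>hfun z\<bar> \<le> \<bar>q - p\<bar> * (1 / (pi * L))" by (intro mult_left_mono) auto
  then show ?thesis using z by (simp add: abs_mult)
qed

lemma Phi_diff_bound:
  assumes "L > 0" "(L \<le> p \<and> L \<le> q) \<or> (p \<le> -L \<and> q \<le> -L)"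
  shows "\<bar>Phi p - Phi q\<bar> \<le> \<bar>p - q\<bar> / (pi * L)"
proof (cases p q rule: linorder_cases)
  case less
  then show ?thesis using Phi_diff_bound_aux[OF assms(1) less] assms by (simp add: abs_minus_commute)
next
  case greater
  then show ?thesis using Phi_diff_bound_aux[OF assms(1) greater] assms by auto
qed (use assms in auto)

lemma Phi_lim: "((\<lambda>t. Phi (t - y) - Phi (t - x)) \<longlongrightarrow> 0) at_infinity"
proof (rule Lim_null_comparison)
  let ?M = "2 * (\<bar>x\<bar> + \<bar>y\<bar>) + 1"
  show "\<forall>\<^sub>F t in at_infinity. norm (Phi (t - y) - Phi (t - x)) \<le> (2 * \<bar>y - x\<bar> / pi) * norm (inverse t)"
    unfolding eventually_at_infinity
  proof (intro exI[of _ ?M] allI impI)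
    fix t :: real assume t: "?M \<le> norm t"
    have L: "\<bar>t\<bar> / 2 > 0" using t by auto
    have side: "(\<bar>t\<bar>/2 \<le> t - y \<and> \<bar>t\<bar>/2 \<le> t - x) \<or> (t - y \<le> - (\<bar>t\<bar>/2) \<and> t - x \<le> - (\<bar>t\<bar>/2))"
      using t by (cases "t \<ge> 0") auto
    have "\<bar>Phi (t - y) - Phi (t - x)\<bar> \<le> \<bar>(t - y) - (t - x)\<bar> / (pi * (\<bar>t\<bar>/2))"
      by (rule Phi_diff_bound[OF L side])
    also have "\<dots> = (2 * \<bar>y - x\<bar> / pi) * norm (inverse t)"
      using L by (simp add: abs_minus_commute field_simps abs_inverse)
    finally show "norm (Phi (t - y) - Phi (t - x)) \<le> (2 * \<bar>y - x\<bar> / pi) * norm (inverse t)" by simp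
  qed
  show "((\<lambda>t. (2 * \<bar>y - x\<bar> / pi) * norm (inverse (t::real))) \<longlongrightarrow> 0) at_infinity"
    by (intro tendsto_mult_right_zero tendsto_norm_zero tendsto_inverse_0)
qed

lemma abs_prod_le_sq: "\<bar>a * b\<bar> \<le> a\<^sup>2 + (b::real)\<^sup>2"
proof -
  have "0 \<le> (\<bar>a\<bar> - \<bar>b\<bar>)\<^sup>2" by simp
  moreover have "(\<bar>a\<bar> - \<bar>b\<bar>)\<^sup>2 = \<bar>a\<bar>\<^sup>2 + \<bar>b\<bar>\<^sup>2 - 2 * \<bar>a\<bar> * \<bar>b\<bar>" by (rule power2_diff)
  moreover have "0 \<le> \<bar>a\<bar> * \<bar>b\<bar>" by simp
  ultimately have "\<bar>a\<bar> * \<bar>b\<bar> \<le> \<bar>a\<bar>\<^sup>2 + \<bar>b\<bar>\<^sup>2" by linarith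
  then show ?thesis by (simp add: abs_mult)
qed

lemma sinc_prod_integrable: "integrable lborel (\<lambda>t. sinc (t - x) * sinc (t - y))"
proof (rule Bochner_Integration.integrable_bound)
  show "integrable lborel (\<lambda>t. (sinc (t - x))\<^sup>2 + (sinc (t - y))\<^sup>2)"
    using sinc_sq_integral[of x] sinc_sq_integral[of y] by auto
  show "(\<lambda>t. sinc (t - x) * sinc (t - y)) \<in> borel_measurable lborel" by measurable
  show "AE t in lborel. norm (sinc (t - x) * sinc (t - y)) \<le> norm ((sinc (t - x))\<^sup>2 + (sinc (t - y))\<^sup>2)"
    using abs_prod_le_sq by auto
qed

lemma sinc_prod_integral:
  assumes xy: "x \<noteq> y"
  shows "integral\<^sup>L lborel (\<lambda>t. sinc (t - x) * sinc (t - y)) = sinc (x - y)"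
proof -
  define d where "d = y - x"
  have d0: "d \<noteq> 0" using xy by (simp add: d_def)
  define F where "F t = 1 / (pi * d) * (cos (pi * d) * (Phi (t - y) - Phi (t - x))
      + sin (pi * d) * (Si (2 * pi * (t - y)) / (2 * pi) + Si (2 * pi * (t - x)) / (2 * pi)))" for t
  have dSi: "((\<lambda>t. Si (2 * pi * (t - z)) / (2 * pi)) has_real_derivative sinc (2 * (t - z))) (at t)" for z t
  proof -
    have "((\<lambda>t. Si (2 * pi * (t - z))) has_real_derivative 2 * pi * sinc (2 * (t - z)) * 1) (at t)"
      by (rule DERIV_chain2[OF DERIV_Si2, of "\<lambda>t. t - z"]) (auto intro!: derivative_eq_intros)
    from DERIV_cdivide[OF this, of "2 * pi"] show ?thesis by simp
  qed
  have dPhi: "((\<lambda>t. Phi (t - z)) has_real_derivative hfun (t - z)) (at t)" for z t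
  proof -
    have "((\<lambda>t. Phi (t - z)) has_real_derivative hfun (t - z) * 1) (at t)"
      by (rule DERIV_chain2[OF DERIV_Phi, of "\<lambda>t. t - z"]) (auto intro!: derivative_eq_intros)
    then show ?thesis by simp
  qed
  have D: "(F has_real_derivative sinc (t - x) * sinc (t - y)) (at t)" for t
  proof -
    have "(F has_real_derivative 1 / (pi * d) * (cos (pi * d) * (hfun (t - y) - hfun (t - x))
      + sin (pi * d) * (sinc (2 * (t - y)) + sinc (2 * (t - x))))) (at t)"
      unfolding F_def[abs_def] by (intro DERIV_cmult DERIV_add DERIV_diff dSi dPhi)
    moreover have "sinc (t - x) * sinc (t - y) = 1 / (pi * ((t - x) - (t - y))) * (cos (pi * ((t - x) - (t - y))) * (hfun (t - y) - hfun (t - x))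
      + sin (pi * ((t - x) - (t - y))) * (sinc (2 * (t - y)) + sinc (2 * (t - x))))"
      by (rule prod_identity) (use xy in auto)
    ultimately show ?thesis by (simp add: d_def)
  qed
  have C: "isCont (\<lambda>t. sinc (t - x) * sinc (t - y)) t" for t
    by (intro continuous_intros isCont_o2[OF _ isCont_sinc'])
  have PL: "((\<lambda>t. Phi (t - y) - Phi (t - x)) \<longlongrightarrow> 0) F" if "F \<le> at_infinity" for F
    using tendsto_mono[OF that Phi_lim] .
  have L1: "(F \<longlongrightarrow> 1 / (pi * d) * (cos (pi * d) * 0 + sin (pi * d) * ((pi/2) / (2 * pi) + (pi/2) / (2 * pi)))) at_top"
    unfolding F_def[abs_def]
    by (intro tendsto_intros PL[OF at_top_le_at_infinity] filterlim_compose[OF Si2_top shift_top]) auto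
  have L2: "(F \<longlongrightarrow> 1 / (pi * d) * (cos (pi * d) * 0 + sin (pi * d) * ((-(pi/2)) / (2 * pi) + (-(pi/2)) / (2 * pi)))) at_bot"
    unfolding F_def[abs_def]
    by (intro tendsto_intros PL[OF at_bot_le_at_infinity] filterlim_compose[OF Si2_bot shift_bot]) auto
  have I: "set_integrable lborel (einterval (-\<infinity>) \<infinity>) (\<lambda>t. sinc (t - x) * sinc (t - y))"
    using sinc_prod_integrable by (simp add: set_integrable_def)
  have "(LBINT t=-\<infinity>..\<infinity>. sinc (t - x) * sinc (t - y)) =
     1 / (pi * d) * (cos (pi * d) * 0 + sin (pi * d) * ((pi/2) / (2 * pi) + (pi/2) / (2 * pi)))
     - 1 / (pi * d) * (cos (pi * d) * 0 + sin (pi * d) * ((-(pi/2)) / (2 * pi) + (-(pi/2)) / (2 * pi)))"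
    by (rule interval_integral_FTC_integrable[where F=F, OF _ _ _ I])
       (use D C L1 L2 in \<open>auto simp: ereal_tendsto_simps1 has_real_derivative_iff_has_vector_derivative[symmetric]\<close>)
  also have "\<dots> = sinc d" using d0 by (simp add: sinc_nz field_simps)
  also have "\<dots> = sinc (x - y)" using sinc_even[of "x - y"] by (simp add: d_def)
  finally show ?thesis by (simp add: LBINT_UNIV)
qed

lemma sinc_gram: "integrable lborel (\<lambda>t. sinc (t - x) * sinc (t - y)) \<and>
   integral\<^sup>L lborel (\<lambda>t. sinc (t - x) * sinc (t - y)) = sinc (x - y)"
proof (cases "x = y")
  case True
  then show ?thesis using sinc_sq_integral[of y] by (simp add: power2_eq_square)
qed (simp add: sinc_prod_integrable sinc_prod_integral)


lemma sep_sum_aux: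
  fixes P :: "real set"
  assumes "finite P" "\<gamma> > 0" "c \<ge> 0" "\<forall>x\<in>P. c + \<gamma> \<le> x" "\<forall>x\<in>P. \<forall>y\<in>P. x \<noteq> y \<longrightarrow> \<gamma> \<le> \<bar>x - y\<bar>"
  shows "(\<Sum>x\<in>P. 1 / x\<^sup>2) \<le> (\<Sum>k<card P. 1 / (c + (real k + 1) * \<gamma>)\<^sup>2)"
  using assms
proof (induction "card P" arbitrary: P c)
  case 0
  then show ?case by simp
next
  case (Suc N)
  then have ne: "P \<noteq> {}" by auto
  define q where "q = Min P"
  have qP: "q \<in> P" using Suc ne by (simp add: q_def)
  have qmin: "\<And>x. x \<in> P \<Longrightarrow> q \<le> x" using Suc by (simp add: q_def)
  define P' where "P' = P - {q}"
  have cardP': "N = card P'" using Suc qP by (simp add: P'_def)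
  have fP': "finite P'" using Suc by (simp add: P'_def)
  have bndP': "\<forall>x\<in>P'. (c + \<gamma>) + \<gamma> \<le> x"
  proof
    fix x assume x: "x \<in> P'"
    then have "x \<in> P" "x \<noteq> q" by (auto simp: P'_def)
    then have "\<gamma> \<le> \<bar>x - q\<bar>" using Suc qP by blast
    moreover have "q \<le> x" using qmin \<open>x \<in> P\<close> by blast
    moreover have "c + \<gamma> \<le> q" using Suc qP by blast
    ultimately show "(c + \<gamma>) + \<gamma> \<le> x" by linarith
  qed
  have sepP': "\<forall>x\<in>P'. \<forall>y\<in>P'. x \<noteq> y \<longrightarrow> \<gamma> \<le> \<bar>x - y\<bar>" using Suc by (auto simp: P'_def)
  have IH: "(\<Sum>x\<in>P'. 1 / x\<^sup>2) \<le> (\<Sum>k<card P'. 1 / ((c + \<gamma>) + (real k + 1) * \<gamma>)\<^sup>2)"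
    by (rule Suc.hyps(1)[OF cardP' fP' Suc.prems(2) _ bndP' sepP']) (use Suc in auto)
  have q1: "1 / q\<^sup>2 \<le> 1 / (c + (real 0 + 1) * \<gamma>)\<^sup>2"
  proof -
    have "c + \<gamma> \<le> q" using Suc qP by blast
    moreover have "0 < c + \<gamma>" using Suc by auto
    ultimately show ?thesis by (auto intro!: divide_left_mono power_mono mult_pos_pos)
  qed
  have "(\<Sum>x\<in>P. 1 / x\<^sup>2) = 1 / q\<^sup>2 + (\<Sum>x\<in>P'. 1 / x\<^sup>2)"
    using Suc qP by (simp add: P'_def sum.remove)
  also have "\<dots> \<le> 1 / (c + (real 0 + 1) * \<gamma>)\<^sup>2 + (\<Sum>k<N. 1 / ((c + \<gamma>) + (real k + 1) * \<gamma>)\<^sup>2)"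
    using add_mono[OF q1 IH] cardP' by simp
  also have "\<dots> = (\<Sum>k<Suc N. 1 / (c + (real k + 1) * \<gamma>)\<^sup>2)"
    by (subst sum.lessThan_Suc_shift) (simp add: algebra_simps)
  finally show ?case using Suc.hyps(2) by simp
qed

lemma sep_sum:
  fixes P :: "real set"
  assumes "finite P" "\<gamma> > 0" "\<forall>x\<in>P. \<gamma> \<le> x" "\<forall>x\<in>P. \<forall>y\<in>P. x \<noteq> y \<longrightarrow> \<gamma> \<le> \<bar>x - y\<bar>"
  shows "(\<Sum>x\<in>P. 1 / x\<^sup>2) \<le> pi\<^sup>2 / (6 * \<gamma>\<^sup>2)"
proof -
  have "(\<Sum>x\<in>P. 1 / x\<^sup>2) \<le> (\<Sum>k<card P. 1 / (0 + (real k + 1) * \<gamma>)\<^sup>2)"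
    by (rule sep_sum_aux) (use assms in auto)
  also have "\<dots> = (\<Sum>k<card P. 1 / real ((k + 1)\<^sup>2)) / \<gamma>\<^sup>2"
    unfolding sum_divide_distrib by (intro sum.cong refl) (simp add: field_simps power2_eq_square)
  also have "\<dots> \<le> (pi\<^sup>2 / 6) / \<gamma>\<^sup>2"
  proof (intro divide_right_mono)
    show "(\<Sum>k<card P. 1 / real ((k + 1)\<^sup>2)) \<le> pi\<^sup>2 / 6"
      using sum_le_suminf[OF sums_summable[OF inverse_squares_sums], of "{..<card P}"]
        sums_unique[OF inverse_squares_sums] by simp
  qed simp
  finally show ?thesis by simp
qed

locale mvs =
  fixes I :: "nat set" and lam :: "nat \<Rightarrow> real" and \<gamma> :: real
  assumes finI: "finite I" and gpos: "\<gamma> > 0"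
    and sep: "\<And>n m. n \<in> I \<Longrightarrow> m \<in> I \<Longrightarrow> n \<noteq> m \<Longrightarrow> \<gamma> \<le> \<bar>lam n - lam m\<bar>"
begin

definition t :: "nat \<Rightarrow> nat \<Rightarrow> real" where "t n m = (if n = m then 0 else 1 / (lam n - lam m))"
definition Tv :: "(nat \<Rightarrow> real) \<Rightarrow> nat \<Rightarrow> real" where "Tv v n = (\<Sum>m\<in>I. t n m * v m)"
definition rr :: "nat \<Rightarrow> real" where "rr n = (\<Sum>m\<in>I. t n m)"
definition SS :: "nat \<Rightarrow> real" where "SS n = (\<Sum>m\<in>I. (t n m)\<^sup>2)"

lemma lam_ne: "n \<in> I \<Longrightarrow> m \<in> I \<Longrightarrow> n \<noteq> m \<Longrightarrow> lam n \<noteq> lam m"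
  using sep[of n m] gpos by auto

lemma t_skew: "t m n = - t n m"
proof (cases "m = n")
  case False
  have "lam m - lam n = - (lam n - lam m)" by simp
  then have "1 / (lam m - lam n) = - (1 / (lam n - lam m))" by (simp only: divide_minus_right)
  then show ?thesis using False by (simp add: t_def)
qed (simp add: t_def)

lemma t_sq_sym: "(t m n)\<^sup>2 = (t n m)\<^sup>2"
  by (simp add: t_skew[of m n])

lemma pf:
  assumes "n \<in> I" "m \<in> I" "k \<in> I"
  shows "t m n * t m k * v n * v k = (if n = k then (t m n)\<^sup>2 * (v n)\<^sup>2 else 0)
     + t n k * v n * v k * (t m n - t m k)
     + (if m = n then (t n k)\<^sup>2 * v n * v k else 0) + (if m = k then (t n k)\<^sup>2 * v n * v k else 0)"
proof -
  consider "n = k" | "n \<noteq> k" "m = n" | "n \<noteq> k" "m = k" | "n \<noteq> k" "m \<noteq> n" "m \<noteq> k" by blast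
  then show ?thesis
  proof cases
    case 1 then show ?thesis by (simp add: t_def power2_eq_square)
  next
    case 2 then show ?thesis by (simp add: t_def power2_eq_square)
  next
    case 3
    have tkk: "t k k = 0" by (simp add: t_def)
    show ?thesis using 3 by (simp add: tkk t_skew[of k n] power2_eq_square algebra_simps)
  next
    case 4
    have a: "lam m - lam n \<noteq> 0" "lam m - lam k \<noteq> 0" "lam n - lam k \<noteq> 0"
      using lam_ne assms 4 by auto
    have "1 / (lam m - lam n) * (1 / (lam m - lam k)) = 1 / (lam n - lam k) * (1 / (lam m - lam n) - 1 / (lam m - lam k))"
      using a by (simp add: field_simps)
    then have eq: "t m n * t m k = t n k * (t m n - t m k)" using 4 by (simp add: t_def)
    have "t m n * t m k * v n * v k = t n k * (t m n - t m k) * v n * v k" by (simp only: eq)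
    then show ?thesis using 4 by (simp add: mult_ac)
  qed
qed

lemma sum_t_col: "(\<Sum>m\<in>I. t m n) = - rr n"
  by (simp add: rr_def t_skew[of _ n] sum_negf)


lemma Tv_sq: "(\<Sum>m\<in>I. (Tv v m)\<^sup>2) = (\<Sum>n\<in>I. (v n)\<^sup>2 * SS n)
    + 2 * (\<Sum>n\<in>I. \<Sum>k\<in>I. (t n k)\<^sup>2 * v n * v k) - 2 * (\<Sum>n\<in>I. v n * rr n * Tv v n)"
proof -
  let ?D = "\<Sum>n\<in>I. \<Sum>k\<in>I. (t n k)\<^sup>2 * v n * v k"
  have "(\<Sum>m\<in>I. (Tv v m)\<^sup>2) = (\<Sum>m\<in>I. \<Sum>n\<in>I. \<Sum>k\<in>I. t m n * t m k * v n * v k)"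
    by (simp add: Tv_def power2_eq_square sum_product mult_ac)
  also have "\<dots> = (\<Sum>m\<in>I. \<Sum>n\<in>I. \<Sum>k\<in>I. (if n = k then (t m n)\<^sup>2 * (v n)\<^sup>2 else 0)
     + t n k * v n * v k * (t m n - t m k)
     + (if m = n then (t n k)\<^sup>2 * v n * v k else 0) + (if m = k then (t n k)\<^sup>2 * v n * v k else 0))"
    by (intro sum.cong refl pf)
  also have "\<dots> = (\<Sum>m\<in>I. \<Sum>n\<in>I. \<Sum>k\<in>I. (if n = k then (t m n)\<^sup>2 * (v n)\<^sup>2 else 0))
     + (\<Sum>m\<in>I. \<Sum>n\<in>I. \<Sum>k\<in>I. t n k * v n * v k * (t m n - t m k))
     + (\<Sum>m\<in>I. \<Sum>n\<in>I. \<Sum>k\<in>I. (if m = n then (t n k)\<^sup>2 * v n * v k else 0))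
     + (\<Sum>m\<in>I. \<Sum>n\<in>I. \<Sum>k\<in>I. (if m = k then (t n k)\<^sup>2 * v n * v k else 0))"
    by (simp add: sum.distrib)
  also have "(\<Sum>m\<in>I. \<Sum>n\<in>I. \<Sum>k\<in>I. (if n = k then (t m n)\<^sup>2 * (v n)\<^sup>2 else 0)) = (\<Sum>n\<in>I. (v n)\<^sup>2 * SS n)"
  proof -
    have "(\<Sum>m\<in>I. \<Sum>n\<in>I. \<Sum>k\<in>I. (if n = k then (t m n)\<^sup>2 * (v n)\<^sup>2 else 0)) = (\<Sum>m\<in>I. \<Sum>n\<in>I. (t m n)\<^sup>2 * (v n)\<^sup>2)"
      using finI by (intro sum.cong refl) (simp add: sum.delta)
    also have "\<dots> = (\<Sum>n\<in>I. \<Sum>m\<in>I. (t n m)\<^sup>2 * (v n)\<^sup>2)" by (subst sum.swap) (simp add: t_sq_sym)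
    also have "\<dots> = (\<Sum>n\<in>I. (v n)\<^sup>2 * SS n)" by (simp add: SS_def sum_distrib_left mult_ac)
    finally show ?thesis .
  qed
  also have "(\<Sum>m\<in>I. \<Sum>n\<in>I. \<Sum>k\<in>I. (if m = n then (t n k)\<^sup>2 * v n * v k else 0)) = ?D"
  proof (rule sum.cong[OF refl])
    fix m assume m: "m \<in> I"
    have e: "(\<Sum>k\<in>I. (if m = n then (t n k)\<^sup>2 * v n * v k else 0)) = (if m = n then (\<Sum>k\<in>I. (t n k)\<^sup>2 * v n * v k) else 0)" for n
      by simp
    show "(\<Sum>n\<in>I. \<Sum>k\<in>I. (if m = n then (t n k)\<^sup>2 * v n * v k else 0)) = (\<Sum>k\<in>I. (t m k)\<^sup>2 * v m * v k)"
      unfolding e using finI m by (simp add: sum.delta)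
  qed
  also have "(\<Sum>m\<in>I. \<Sum>n\<in>I. \<Sum>k\<in>I. (if m = k then (t n k)\<^sup>2 * v n * v k else 0)) = ?D"
  proof -
    have "(\<Sum>m\<in>I. \<Sum>n\<in>I. \<Sum>k\<in>I. (if m = k then (t n k)\<^sup>2 * v n * v k else 0)) = (\<Sum>m\<in>I. \<Sum>n\<in>I. (t n m)\<^sup>2 * v n * v m)"
      using finI by (intro sum.cong refl) (simp add: sum.delta)
    also have "\<dots> = ?D" by (rule sum.swap)
    finally show ?thesis .
  qed
  also have "(\<Sum>m\<in>I. \<Sum>n\<in>I. \<Sum>k\<in>I. t n k * v n * v k * (t m n - t m k)) = - 2 * (\<Sum>n\<in>I. v n * rr n * Tv v n)"
  proof -
    have "(\<Sum>m\<in>I. \<Sum>n\<in>I. \<Sum>k\<in>I. t n k * v n * v k * (t m n - t m k))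
        = (\<Sum>n\<in>I. \<Sum>k\<in>I. \<Sum>m\<in>I. t n k * v n * v k * (t m n - t m k))"
    proof -
      have "(\<Sum>m\<in>I. \<Sum>n\<in>I. \<Sum>k\<in>I. t n k * v n * v k * (t m n - t m k))
          = (\<Sum>n\<in>I. \<Sum>m\<in>I. \<Sum>k\<in>I. t n k * v n * v k * (t m n - t m k))" by (rule sum.swap)
      also have "\<dots> = (\<Sum>n\<in>I. \<Sum>k\<in>I. \<Sum>m\<in>I. t n k * v n * v k * (t m n - t m k))"
        by (intro sum.cong refl sum.swap)
      finally show ?thesis .
    qed
    also have "\<dots> = (\<Sum>n\<in>I. \<Sum>k\<in>I. t n k * v n * v k * (rr k - rr n))"
      by (simp add: sum_distrib_left[symmetric] sum_subtractf sum_t_col)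
    also have "\<dots> = (\<Sum>n\<in>I. \<Sum>k\<in>I. t n k * v n * v k * rr k) - (\<Sum>n\<in>I. v n * rr n * Tv v n)"
      by (simp add: algebra_simps sum_subtractf Tv_def sum_distrib_left)
    also have "(\<Sum>n\<in>I. \<Sum>k\<in>I. t n k * v n * v k * rr k) = - (\<Sum>k\<in>I. v k * rr k * Tv v k)"
    proof -
      have "(\<Sum>n\<in>I. \<Sum>k\<in>I. t n k * v n * v k * rr k) = (\<Sum>k\<in>I. \<Sum>n\<in>I. t n k * v n * v k * rr k)"
        by (rule sum.swap)
      also have "\<dots> = (\<Sum>k\<in>I. \<Sum>n\<in>I. - (v k * rr k * (t k n * v n)))"
        apply (intro sum.cong refl)
        subgoal for k n using t_skew[of n k] by (simp add: mult_ac)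
        done
      also have "\<dots> = - (\<Sum>k\<in>I. v k * rr k * Tv v k)"
        by (simp add: Tv_def sum_distrib_left sum_negf)
      finally show ?thesis .
    qed
    finally show ?thesis by simp
  qed
  finally show ?thesis by simp
qed


lemma Q_bound:
  assumes "\<And>n. n \<in> I \<Longrightarrow> SS n \<le> Mx"
  shows "(\<Sum>n\<in>I. (v n)\<^sup>2 * SS n) + 2 * (\<Sum>n\<in>I. \<Sum>k\<in>I. (t n k)\<^sup>2 * v n * v k) \<le> 3 * Mx * (\<Sum>n\<in>I. (v n)\<^sup>2)"
proof -
  have "2 * (\<Sum>n\<in>I. \<Sum>k\<in>I. (t n k)\<^sup>2 * v n * v k) = (\<Sum>n\<in>I. \<Sum>k\<in>I. (t n k)\<^sup>2 * (2 * v n * v k))"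
    by (simp add: sum_distrib_left mult_ac)
  also have "\<dots> \<le> (\<Sum>n\<in>I. \<Sum>k\<in>I. (t n k)\<^sup>2 * ((v n)\<^sup>2 + (v k)\<^sup>2))"
  proof (intro sum_mono mult_left_mono)
    fix n k
    have "0 \<le> (v n - v k)\<^sup>2" by simp
    then show "2 * v n * v k \<le> (v n)\<^sup>2 + (v k)\<^sup>2" by (simp add: power2_diff)
  qed simp
  also have "\<dots> = (\<Sum>n\<in>I. \<Sum>k\<in>I. (t n k)\<^sup>2 * (v n)\<^sup>2) + (\<Sum>n\<in>I. \<Sum>k\<in>I. (t n k)\<^sup>2 * (v k)\<^sup>2)"
    by (simp add: distrib_left sum.distrib)
  also have "(\<Sum>n\<in>I. \<Sum>k\<in>I. (t n k)\<^sup>2 * (v n)\<^sup>2) = (\<Sum>n\<in>I. (v n)\<^sup>2 * SS n)"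
    by (simp add: SS_def sum_distrib_left mult_ac)
  also have "(\<Sum>n\<in>I. \<Sum>k\<in>I. (t n k)\<^sup>2 * (v k)\<^sup>2) = (\<Sum>n\<in>I. (v n)\<^sup>2 * SS n)"
  proof -
    have "(\<Sum>n\<in>I. \<Sum>k\<in>I. (t n k)\<^sup>2 * (v k)\<^sup>2) = (\<Sum>k\<in>I. \<Sum>n\<in>I. (t n k)\<^sup>2 * (v k)\<^sup>2)"
      by (rule sum.swap)
    also have "\<dots> = (\<Sum>k\<in>I. (v k)\<^sup>2 * SS k)"
      unfolding SS_def sum_distrib_left
      apply (intro sum.cong refl)
      subgoal for k n using t_sq_sym[of n k] by (simp add: mult_ac)
      done
    finally show ?thesis .
  qed
  finally have A: "2 * (\<Sum>n\<in>I. \<Sum>k\<in>I. (t n k)\<^sup>2 * v n * v k) \<le> 2 * (\<Sum>n\<in>I. (v n)\<^sup>2 * SS n)" by simp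
  have B: "(\<Sum>n\<in>I. (v n)\<^sup>2 * SS n) \<le> (\<Sum>n\<in>I. (v n)\<^sup>2 * Mx)"
    by (intro sum_mono mult_left_mono assms) auto
  have "(\<Sum>n\<in>I. (v n)\<^sup>2 * Mx) = Mx * (\<Sum>n\<in>I. (v n)\<^sup>2)" by (simp add: sum_distrib_left mult_ac)
  then show ?thesis using A B by linarith
qed

lemma SS_half:
  assumes n: "n \<in> I"
  and sgn: "\<And>m. m \<in> A \<Longrightarrow> 0 < s * (lam m - lam n)" and AI: "A \<subseteq> I" and s: "s = 1 \<or> s = -1"
  shows "(\<Sum>m\<in>A. (t n m)\<^sup>2) \<le> pi\<^sup>2 / (6 * \<gamma>\<^sup>2)"
proof -
  have fA: "finite A" using AI finI finite_subset by blast
  define f where "f m = s * (lam m - lam n)" for m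
  have mn: "m \<noteq> n" if "m \<in> A" for m using sgn[OF that] by auto
  have inj: "inj_on f A"
  proof (rule inj_onI)
    fix a b assume ab: "a \<in> A" "b \<in> A" "f a = f b"
    then have "lam a = lam b" using s by (auto simp: f_def)
    then show "a = b" using lam_ne ab AI by blast
  qed
  have "(\<Sum>m\<in>A. (t n m)\<^sup>2) = (\<Sum>m\<in>A. 1 / (f m)\<^sup>2)"
  proof (intro sum.cong refl)
    fix m assume "m \<in> A"
    then have "m \<noteq> n" by (rule mn)
    moreover have "(lam n - lam m)\<^sup>2 = (s * (lam m - lam n))\<^sup>2" using s by (auto simp: power2_eq_square algebra_simps)
    ultimately show "(t n m)\<^sup>2 = 1 / (f m)\<^sup>2" by (simp add: t_def f_def power_divide)
  qed
  also have "\<dots> = (\<Sum>x\<in>f ` A. 1 / x\<^sup>2)" by (simp add: sum.reindex[OF inj])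
  also have "\<dots> \<le> pi\<^sup>2 / (6 * \<gamma>\<^sup>2)"
  proof (rule sep_sum)
    show "finite (f ` A)" using fA by simp
    show "\<gamma> > 0" by (rule gpos)
    show "\<forall>x\<in>f ` A. \<gamma> \<le> x"
    proof
      fix x assume "x \<in> f ` A"
      then obtain m where m: "m \<in> A" "x = f m" by blast
      have "\<gamma> \<le> \<bar>lam n - lam m\<bar>" using sep[of n m] n m AI mn by auto
      moreover have "\<bar>lam n - lam m\<bar> = f m" using sgn[OF m(1)] s by (auto simp: f_def)
      ultimately show "\<gamma> \<le> x" using m by simp
    qed
    show "\<forall>x\<in>f ` A. \<forall>y\<in>f ` A. x \<noteq> y \<longrightarrow> \<gamma> \<le> \<bar>x - y\<bar>"
    proof (intro ballI impI)
      fix x y assume "x \<in> f ` A" "y \<in> f ` A" "x \<noteq> y"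
      then obtain a b where ab: "a \<in> A" "b \<in> A" "x = f a" "y = f b" "a \<noteq> b" by blast
      have "\<gamma> \<le> \<bar>lam a - lam b\<bar>" using sep ab AI by blast
      moreover have "\<bar>x - y\<bar> = \<bar>lam a - lam b\<bar>" using ab s by (auto simp: f_def algebra_simps)
      ultimately show "\<gamma> \<le> \<bar>x - y\<bar>" by simp
    qed
  qed
  finally show ?thesis .
qed

lemma SS_bound:
  assumes n: "n \<in> I"
  shows "SS n \<le> pi\<^sup>2 / (3 * \<gamma>\<^sup>2)"
proof -
  define A where "A = {m \<in> I. lam n < lam m}"
  define B where "B = {m \<in> I. lam m < lam n}"
  have "SS n = (\<Sum>m\<in>A \<union> B. (t n m)\<^sup>2)"
    unfolding SS_def
  proof (rule sum.mono_neutral_right[OF finI])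
    show "A \<union> B \<subseteq> I" by (auto simp: A_def B_def)
    show "\<forall>m\<in>I - (A \<union> B). (t n m)\<^sup>2 = 0"
    proof
      fix m assume "m \<in> I - (A \<union> B)"
      then have "m \<in> I" "lam m = lam n" by (auto simp: A_def B_def)
      then have "m = n" using lam_ne n by metis
      then show "(t n m)\<^sup>2 = 0" by (simp add: t_def)
    qed
  qed
  also have "\<dots> = (\<Sum>m\<in>A. (t n m)\<^sup>2) + (\<Sum>m\<in>B. (t n m)\<^sup>2)"
    by (rule sum.union_disjoint) (use finI in \<open>auto simp: A_def B_def\<close>)
  also have "\<dots> \<le> pi\<^sup>2 / (6 * \<gamma>\<^sup>2) + pi\<^sup>2 / (6 * \<gamma>\<^sup>2)"
    by (intro add_mono SS_half[OF n, where s=1] SS_half[OF n, where s="-1"]) (auto simp: A_def B_def)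
  finally show ?thesis by simp
qed

lemma Tv_adj: "(\<Sum>n\<in>I. u n * Tv w n) = - (\<Sum>n\<in>I. w n * Tv u n)"
proof -
  have "(\<Sum>n\<in>I. u n * Tv w n) = (\<Sum>n\<in>I. \<Sum>m\<in>I. u n * t n m * w m)"
    by (simp add: Tv_def sum_distrib_left mult_ac)
  also have "\<dots> = (\<Sum>m\<in>I. \<Sum>n\<in>I. u n * t n m * w m)" by (rule sum.swap)
  also have "\<dots> = (\<Sum>m\<in>I. \<Sum>n\<in>I. - (w m * (t m n * u n)))"
    apply (intro sum.cong refl)
    subgoal for m n using t_skew[of n m] by (simp add: mult_ac)
    done
  also have "\<dots> = - (\<Sum>n\<in>I. w n * Tv u n)" by (simp add: Tv_def sum_distrib_left sum_negf)
  finally show ?thesis .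
qed

lemma Tv_lin: "Tv (\<lambda>n. u n - c * g n) m = Tv u m - c * Tv g m"
  by (simp add: Tv_def algebra_simps sum_subtractf sum_distrib_left)

lemma Tv_scale: "Tv (\<lambda>n. c * u n) m = c * Tv u m"
  by (simp add: Tv_def algebra_simps sum_distrib_left)

lemma Tv_zero: "Tv (\<lambda>n. 0) m = 0"
  by (simp add: Tv_def)



definition Phi2 :: "(nat \<Rightarrow> real) \<Rightarrow> (nat \<Rightarrow> real) \<Rightarrow> real" where
  "Phi2 u w = 2 * (\<Sum>n\<in>I. u n * Tv w n)"
definition Nn :: "(nat \<Rightarrow> real) \<Rightarrow> (nat \<Rightarrow> real) \<Rightarrow> real" where
  "Nn u w = (\<Sum>n\<in>I. (u n)\<^sup>2) + (\<Sum>n\<in>I. (w n)\<^sup>2)"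
definition K0 :: real where "K0 = (\<Sum>n\<in>I. \<Sum>m\<in>I. \<bar>t n m\<bar>)"

lemma Nn_nonneg: "0 \<le> Nn u w"
  by (simp add: Nn_def sum_nonneg)

lemma sq_le_Nn: "n \<in> I \<Longrightarrow> (u n)\<^sup>2 \<le> Nn u w" "n \<in> I \<Longrightarrow> (w n)\<^sup>2 \<le> Nn u w"
proof -
  assume n: "n \<in> I"
  have a: "(u n)\<^sup>2 \<le> (\<Sum>n\<in>I. (u n)\<^sup>2)" by (rule member_le_sum[OF n]) (auto simp: finI)
  have b: "(w n)\<^sup>2 \<le> (\<Sum>n\<in>I. (w n)\<^sup>2)" by (rule member_le_sum[OF n]) (auto simp: finI)
  have c: "0 \<le> (\<Sum>n\<in>I. (u n)\<^sup>2)" "0 \<le> (\<Sum>n\<in>I. (w n)\<^sup>2)" by (auto intro: sum_nonneg)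
  show "(u n)\<^sup>2 \<le> Nn u w" "(w n)\<^sup>2 \<le> Nn u w" using a b c by (auto simp: Nn_def)
qed

lemma crude: "\<bar>Phi2 u w\<bar> \<le> K0 * Nn u w"
proof -
  have "Phi2 u w = (\<Sum>n\<in>I. \<Sum>m\<in>I. 2 * u n * t n m * w m)"
    by (simp add: Phi2_def Tv_def sum_distrib_left mult_ac)
  also have "\<bar>\<dots>\<bar> \<le> (\<Sum>n\<in>I. \<Sum>m\<in>I. \<bar>2 * u n * t n m * w m\<bar>)"
    by (rule order_trans[OF sum_abs sum_mono]) (rule sum_abs)
  also have "\<dots> \<le> (\<Sum>n\<in>I. \<Sum>m\<in>I. \<bar>t n m\<bar> * Nn u w)"
  proof (intro sum_mono)
    fix n m assume n: "n \<in> I" and m: "m \<in> I"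
    have "0 \<le> (\<bar>u n\<bar> - \<bar>w m\<bar>)\<^sup>2" by simp
    then have "2 * \<bar>u n\<bar> * \<bar>w m\<bar> \<le> (u n)\<^sup>2 + (w m)\<^sup>2" by (simp add: power2_diff)
    also have "\<dots> \<le> Nn u w"
    proof -
      have "(\<Sum>n\<in>I. (u n)\<^sup>2) + (\<Sum>n\<in>I. (w n)\<^sup>2) \<ge> (u n)\<^sup>2 + (w m)\<^sup>2"
        by (intro add_mono member_le_sum n m) (auto simp: finI)
      then show ?thesis by (simp add: Nn_def)
    qed
    finally have "2 * \<bar>u n\<bar> * \<bar>w m\<bar> \<le> Nn u w" .
    then have "\<bar>t n m\<bar> * (2 * \<bar>u n\<bar> * \<bar>w m\<bar>) \<le> \<bar>t n m\<bar> * Nn u w" by (intro mult_left_mono) auto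
    then show "\<bar>2 * u n * t n m * w m\<bar> \<le> \<bar>t n m\<bar> * Nn u w" by (simp add: abs_mult mult_ac)
  qed
  also have "\<dots> = K0 * Nn u w" by (simp add: K0_def sum_distrib_right)
  finally show ?thesis .
qed

lemma Phi2_scale: "Phi2 (\<lambda>n. c * u n) (\<lambda>n. c * w n) = c\<^sup>2 * Phi2 u w"
  by (simp add: Phi2_def Tv_scale sum_distrib_left power2_eq_square mult_ac)

lemma Nn_scale: "Nn (\<lambda>n. c * u n) (\<lambda>n. c * w n) = c\<^sup>2 * Nn u w"
  by (simp add: Nn_def power_mult_distrib sum_distrib_left distrib_left)

lemma Nn_lin: "Nn (\<lambda>n. u n - c * g n) (\<lambda>n. w n - c * h n) =
   Nn u w - 2 * c * ((\<Sum>n\<in>I. u n * g n) + (\<Sum>n\<in>I. w n * h n)) + c\<^sup>2 * Nn g h"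
  by (simp add: Nn_def power2_diff power_mult_distrib sum.distrib sum_subtractf sum_distrib_left algebra_simps)

lemma Phi2_lin: "Phi2 (\<lambda>n. u n - c * g n) (\<lambda>n. w n - c * h n) =
   Phi2 u w - c * (Phi2 g w + Phi2 u h) + c\<^sup>2 * Phi2 g h"
  by (simp add: Phi2_def Tv_lin power2_eq_square sum.distrib sum_subtractf sum_distrib_left algebra_simps)



lemma MV_upper: "Phi2 u w \<le> (pi / \<gamma>) * Nn u w"
proof (cases "I = {}")
  case True
  show ?thesis unfolding Phi2_def Nn_def using True by simp
next
  case False
  then obtain n0 where n0: "n0 \<in> I" by blast
  define V where "V = {Phi2 u w | u w. Nn u w = 1}"
  define e0 where "e0 = (\<lambda>n. if n = n0 then 1 else 0 :: real)"
  have "Nn e0 (\<lambda>_. 0) = 1"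
    using finI n0 by (simp add: Nn_def e0_def if_distrib[of "\<lambda>x. x\<^sup>2"] sum.delta cong: if_cong)
  moreover have "Phi2 e0 (\<lambda>_. 0) = 0" by (simp add: Phi2_def Tv_zero)
  ultimately have V0: "0 \<in> V" unfolding V_def by force
  have bdd: "bdd_above V"
  proof (rule bdd_aboveI)
    fix x assume "x \<in> V"
    then obtain u w where "x = Phi2 u w" "Nn u w = 1" by (auto simp: V_def)
    then show "x \<le> K0" using crude[of u w] by simp
  qed
  define \<mu> where "\<mu> = Sup V"
  have le_mu: "x \<le> \<mu>" if "x \<in> V" for x unfolding \<mu>_def by (rule cSup_upper[OF that bdd])
  have mu0: "0 \<le> \<mu>" using le_mu[OF V0] .
  have psd: "Phi2 u w \<le> \<mu> * Nn u w" for u w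
  proof (cases "Nn u w = 0")
    case True
    have su: "0 \<le> (\<Sum>n\<in>I. (u n)\<^sup>2)" "0 \<le> (\<Sum>n\<in>I. (w n)\<^sup>2)" by (auto intro: sum_nonneg)
    then have "(\<Sum>n\<in>I. (u n)\<^sup>2) = 0" using True by (simp add: Nn_def)
    then have "\<forall>n\<in>I. u n = 0" using finI by (simp add: sum_nonneg_eq_0_iff)
    then have "Phi2 u w = 0" by (simp add: Phi2_def)
    then show ?thesis using True by simp
  next
    case False
    then have Np: "0 < Nn u w" using Nn_nonneg[of u w] by linarith
    define c where "c = 1 / sqrt (Nn u w)"
    have c2: "c\<^sup>2 = 1 / Nn u w" using Np by (simp add: c_def power_divide)
    have "Nn (\<lambda>n. c * u n) (\<lambda>n. c * w n) = 1" using Np by (simp add: Nn_scale c2)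
    then have "Phi2 (\<lambda>n. c * u n) (\<lambda>n. c * w n) \<in> V" unfolding V_def by blast
    then have "c\<^sup>2 * Phi2 u w \<le> \<mu>" using le_mu by (simp add: Phi2_scale)
    then have "Phi2 u w / Nn u w \<le> \<mu>" by (simp add: c2)
    then show ?thesis using Np by (simp add: divide_le_eq mult.commute)
  qed
  define Mx where "Mx = pi\<^sup>2 / (3 * \<gamma>\<^sup>2)"
  have SSb: "\<And>n. n \<in> I \<Longrightarrow> SS n \<le> Mx" unfolding Mx_def by (rule SS_bound)
  have key: "\<mu>\<^sup>2 \<le> 3 * Mx"
  proof (rule field_le_epsilon)
    fix \<delta> :: real assume \<delta>: "0 < \<delta>"
    define K where "K = \<mu> + K0 + 1"
    have K0nn: "0 \<le> K0" by (simp add: K0_def sum_nonneg)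
    have Kpos: "0 < K" using mu0 K0nn by (simp add: K_def)
    define E1 where "E1 = (\<Sum>n\<in>I. 4 * \<mu> + 4 * \<bar>rr n\<bar>)"
    have E1nn: "0 \<le> E1" unfolding E1_def using mu0 by (intro sum_nonneg) auto
    define \<epsilon> where "\<epsilon> = (\<delta> / (E1 + 1))\<^sup>2 / K"
    have eps: "0 < \<epsilon>" using \<delta> E1nn Kpos by (simp add: \<epsilon>_def)
    have "\<mu> - \<epsilon> < Sup V" using eps by (simp add: \<mu>_def)
    then obtain x where "x \<in> V" "\<mu> - \<epsilon> < x" using less_cSupD[of V "\<mu> - \<epsilon>"] V0 by blast
    then obtain u w where uw: "Nn u w = 1" "\<mu> - \<epsilon> < Phi2 u w" by (auto simp: V_def)
    define g1 where "g1 n = \<mu> * u n - Tv w n" for n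
    define g2 where "g2 n = \<mu> * w n + Tv u n" for n
    define G where "G = Nn g1 g2"
    have Gnn: "0 \<le> G" by (simp add: G_def Nn_nonneg)
    have cross: "\<mu> * ((\<Sum>n\<in>I. u n * g1 n) + (\<Sum>n\<in>I. w n * g2 n)) - (Phi2 g1 w + Phi2 u g2) / 2 = G"
    proof -
      have p1: "Phi2 g1 w = 2 * (\<Sum>n\<in>I. g1 n * Tv w n)" by (simp add: Phi2_def)
      have p2: "Phi2 u g2 = - 2 * (\<Sum>n\<in>I. g2 n * Tv u n)" using Tv_adj[of u g2] by (simp add: Phi2_def)
      have "\<mu> * ((\<Sum>n\<in>I. u n * g1 n) + (\<Sum>n\<in>I. w n * g2 n)) - (Phi2 g1 w + Phi2 u g2) / 2
          = \<mu> * (\<Sum>n\<in>I. u n * g1 n) + \<mu> * (\<Sum>n\<in>I. w n * g2 n) - (\<Sum>n\<in>I. g1 n * Tv w n) + (\<Sum>n\<in>I. g2 n * Tv u n)"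
        unfolding p1 p2 distrib_left by (simp add: field_simps)
      also have "\<dots> = (\<Sum>n\<in>I. g1 n * (\<mu> * u n - Tv w n)) + (\<Sum>n\<in>I. g2 n * (\<mu> * w n + Tv u n))"
        by (simp add: sum_distrib_left sum_subtractf sum.distrib algebra_simps)
      also have "\<dots> = G" by (simp add: G_def Nn_def g1_def[symmetric] g2_def[symmetric] power2_eq_square)
      finally show ?thesis .
    qed
    define \<tau> where "\<tau> = 1 / K"
    have tau: "0 < \<tau>" "\<tau>\<^sup>2 * K = \<tau>" using Kpos by (auto simp: \<tau>_def power2_eq_square)
    have "0 \<le> \<mu> * Nn (\<lambda>n. u n - \<tau> * g1 n) (\<lambda>n. w n - \<tau> * g2 n) - Phi2 (\<lambda>n. u n - \<tau> * g1 n) (\<lambda>n. w n - \<tau> * g2 n)"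
      using psd by simp
    also have "\<dots> = (\<mu> * Nn u w - Phi2 u w) - 2 * \<tau> * (\<mu> * ((\<Sum>n\<in>I. u n * g1 n) + (\<Sum>n\<in>I. w n * g2 n)) - (Phi2 g1 w + Phi2 u g2) / 2)
        + \<tau>\<^sup>2 * (\<mu> * Nn g1 g2 - Phi2 g1 g2)"
      by (simp add: Nn_lin Phi2_lin algebra_simps)
    also have "\<dots> = (\<mu> - Phi2 u w) - 2 * \<tau> * G + \<tau>\<^sup>2 * (\<mu> * G - Phi2 g1 g2)"
      by (simp add: cross uw G_def)
    finally have ineq: "2 * \<tau> * G \<le> (\<mu> - Phi2 u w) + \<tau>\<^sup>2 * (\<mu> * G - Phi2 g1 g2)" by simp
    have "- Phi2 g1 g2 \<le> K0 * G" using crude[of g1 g2] by (simp add: G_def)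
    then have "\<mu> * G - Phi2 g1 g2 \<le> K * G" using Gnn by (simp add: K_def algebra_simps)
    then have "\<tau>\<^sup>2 * (\<mu> * G - Phi2 g1 g2) \<le> \<tau>\<^sup>2 * (K * G)" by (intro mult_left_mono) auto
    also have "\<dots> = \<tau> * G" using tau by (simp add: mult.assoc[symmetric])
    finally have "2 * \<tau> * G \<le> \<epsilon> + \<tau> * G" using ineq uw by linarith
    then have "\<tau> * G \<le> \<epsilon>" by (simp add: mult.commute)
    then have GK: "G \<le> K * \<epsilon>" using Kpos by (simp add: \<tau>_def field_simps)
    define \<eta> where "\<eta> = sqrt G"
    have eta: "\<eta> \<le> \<delta> / (E1 + 1)"
    proof -
      have "\<eta> \<le> sqrt (K * \<epsilon>)" unfolding \<eta>_def by (rule real_sqrt_le_mono[OF GK])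
      also have "K * \<epsilon> = (\<delta> / (E1 + 1))\<^sup>2" using Kpos by (simp add: \<epsilon>_def)
      also have "sqrt \<dots> = \<delta> / (E1 + 1)" using \<delta> E1nn by simp
      finally show ?thesis .
    qed
    have gb: "\<bar>g1 n\<bar> \<le> \<eta>" "\<bar>g2 n\<bar> \<le> \<eta>" if "n \<in> I" for n
    proof -
      have "(g1 n)\<^sup>2 \<le> G" "(g2 n)\<^sup>2 \<le> G" using sq_le_Nn[OF that] by (auto simp: G_def)
      then show "\<bar>g1 n\<bar> \<le> \<eta>" "\<bar>g2 n\<bar> \<le> \<eta>" unfolding \<eta>_def
        by (metis real_sqrt_abs real_sqrt_le_mono)+
    qed
    have ub: "\<bar>u n\<bar> \<le> 1" "\<bar>w n\<bar> \<le> 1" if "n \<in> I" for n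
    proof -
      have "(u n)\<^sup>2 \<le> 1" "(w n)\<^sup>2 \<le> 1" using sq_le_Nn(1)[OF that, of u w] sq_le_Nn(2)[OF that, of w u] uw by auto
      then show "\<bar>u n\<bar> \<le> 1" "\<bar>w n\<bar> \<le> 1" by (simp_all add: abs_square_le_1)
    qed
    have Tw: "Tv w n = \<mu> * u n - g1 n" for n by (simp add: g1_def)
    have Tu: "Tv u n = g2 n - \<mu> * w n" for n by (simp add: g2_def)
    have idw: "(\<Sum>m\<in>I. (Tv w m)\<^sup>2) \<le> 3 * Mx * (\<Sum>n\<in>I. (w n)\<^sup>2) - 2 * (\<Sum>n\<in>I. w n * rr n * Tv w n)"
      using Tv_sq[of w] Q_bound[OF SSb, of w] by linarith
    have idu: "(\<Sum>m\<in>I. (Tv u m)\<^sup>2) \<le> 3 * Mx * (\<Sum>n\<in>I. (u n)\<^sup>2) - 2 * (\<Sum>n\<in>I. u n * rr n * Tv u n)"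
      using Tv_sq[of u] Q_bound[OF SSb, of u] by linarith
    have lw: "(\<Sum>m\<in>I. \<mu>\<^sup>2 * (u m)\<^sup>2 - 2 * \<mu> * u m * g1 m) \<le> (\<Sum>m\<in>I. (Tv w m)\<^sup>2)"
    proof (intro sum_mono)
      fix m have "0 \<le> (g1 m)\<^sup>2" by simp
      then show "\<mu>\<^sup>2 * (u m)\<^sup>2 - 2 * \<mu> * u m * g1 m \<le> (Tv w m)\<^sup>2"
        by (simp add: Tw power2_diff power_mult_distrib)
    qed
    have lu: "(\<Sum>m\<in>I. \<mu>\<^sup>2 * (w m)\<^sup>2 - 2 * \<mu> * w m * g2 m) \<le> (\<Sum>m\<in>I. (Tv u m)\<^sup>2)"
    proof (intro sum_mono)
      fix m have "0 \<le> (g2 m)\<^sup>2" by simp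
      then show "\<mu>\<^sup>2 * (w m)\<^sup>2 - 2 * \<mu> * w m * g2 m \<le> (Tv u m)\<^sup>2"
        by (simp add: Tu power2_diff power_mult_distrib algebra_simps)
    qed
    have "\<mu>\<^sup>2 = \<mu>\<^sup>2 * Nn u w" using uw by simp
    also have "\<dots> = (\<Sum>m\<in>I. \<mu>\<^sup>2 * (u m)\<^sup>2 - 2 * \<mu> * u m * g1 m) + (\<Sum>m\<in>I. \<mu>\<^sup>2 * (w m)\<^sup>2 - 2 * \<mu> * w m * g2 m)
        + (\<Sum>n\<in>I. 2 * \<mu> * (u n * g1 n + w n * g2 n))"
    proof -
      have "(\<Sum>m\<in>I. \<mu>\<^sup>2 * (u m)\<^sup>2 - 2 * \<mu> * u m * g1 m) + (\<Sum>m\<in>I. \<mu>\<^sup>2 * (w m)\<^sup>2 - 2 * \<mu> * w m * g2 m)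
        + (\<Sum>n\<in>I. 2 * \<mu> * (u n * g1 n + w n * g2 n)) = (\<Sum>m\<in>I. (\<mu>\<^sup>2 * (u m)\<^sup>2 - 2 * \<mu> * u m * g1 m)
         + (\<mu>\<^sup>2 * (w m)\<^sup>2 - 2 * \<mu> * w m * g2 m) + 2 * \<mu> * (u m * g1 m + w m * g2 m))"
        by (simp only: sum.distrib)
      also have "\<dots> = (\<Sum>m\<in>I. \<mu>\<^sup>2 * (u m)\<^sup>2 + \<mu>\<^sup>2 * (w m)\<^sup>2)"
        by (intro sum.cong refl) (simp add: algebra_simps)
      also have "\<dots> = \<mu>\<^sup>2 * Nn u w" by (simp only: Nn_def sum.distrib sum_distrib_left distrib_left)
      finally show ?thesis by simp
    qed
    also have "\<dots> \<le> (3 * Mx * (\<Sum>n\<in>I. (w n)\<^sup>2) - 2 * (\<Sum>n\<in>I. w n * rr n * Tv w n))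
        + (3 * Mx * (\<Sum>n\<in>I. (u n)\<^sup>2) - 2 * (\<Sum>n\<in>I. u n * rr n * Tv u n))
        + (\<Sum>n\<in>I. 2 * \<mu> * (u n * g1 n + w n * g2 n))"
      using lw lu idw idu by linarith
    also have "\<dots> = 3 * Mx * Nn u w + (\<Sum>n\<in>I. 2 * \<mu> * (u n * g1 n + w n * g2 n) - 2 * rr n * (u n * g2 n - w n * g1 n))"
    proof -
      have h: "(\<Sum>n\<in>I. w n * rr n * Tv w n) + (\<Sum>n\<in>I. u n * rr n * Tv u n) = (\<Sum>n\<in>I. rr n * (u n * g2 n - w n * g1 n))"
      proof -
        have "(\<Sum>n\<in>I. w n * rr n * Tv w n) + (\<Sum>n\<in>I. u n * rr n * Tv u n) = (\<Sum>n\<in>I. w n * rr n * Tv w n + u n * rr n * Tv u n)"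
          by (simp only: sum.distrib)
        also have "\<dots> = (\<Sum>n\<in>I. rr n * (u n * g2 n - w n * g1 n))"
          by (intro sum.cong refl) (simp add: Tw Tu algebra_simps)
        finally show ?thesis .
      qed
      have h2: "(\<Sum>n\<in>I. 2 * \<mu> * (u n * g1 n + w n * g2 n) - 2 * rr n * (u n * g2 n - w n * g1 n))
          = (\<Sum>n\<in>I. 2 * \<mu> * (u n * g1 n + w n * g2 n)) - 2 * (\<Sum>n\<in>I. rr n * (u n * g2 n - w n * g1 n))"
        by (simp only: sum_subtractf sum_distrib_left mult.assoc)
      show ?thesis unfolding h2 using h by (simp add: Nn_def distrib_left)
    qed
    also have "\<dots> \<le> 3 * Mx + (\<Sum>n\<in>I. (4 * \<mu> + 4 * \<bar>rr n\<bar>) * \<eta>)"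
    proof -
      have "(\<Sum>n\<in>I. 2 * \<mu> * (u n * g1 n + w n * g2 n) - 2 * rr n * (u n * g2 n - w n * g1 n))
          \<le> (\<Sum>n\<in>I. (4 * \<mu> + 4 * \<bar>rr n\<bar>) * \<eta>)"
      proof (rule sum_mono)
        fix n assume n: "n \<in> I"
        have p: "\<bar>a * b\<bar> \<le> \<eta>" if "\<bar>a\<bar> \<le> 1" "\<bar>b\<bar> \<le> \<eta>" for a b
        proof -
          have "\<bar>a\<bar> * \<bar>b\<bar> \<le> 1 * \<eta>" using that by (intro mult_mono) auto
          then show ?thesis by (simp add: abs_mult)
        qed
        have b1: "\<bar>u n * g1 n\<bar> \<le> \<eta>" "\<bar>w n * g2 n\<bar> \<le> \<eta>" "\<bar>u n * g2 n\<bar> \<le> \<eta>" "\<bar>w n * g1 n\<bar> \<le> \<eta>"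
          using p ub[OF n] gb[OF n] by auto
        have "2 * \<mu> * (u n * g1 n + w n * g2 n) \<le> 2 * \<mu> * (2 * \<eta>)"
          using b1 mu0 by (intro mult_left_mono) auto
        moreover have "- (2 * rr n * (u n * g2 n - w n * g1 n)) \<le> 2 * \<bar>rr n\<bar> * (2 * \<eta>)"
        proof -
          have "\<bar>u n * g2 n - w n * g1 n\<bar> \<le> 2 * \<eta>" using b1 by linarith
          then have F1: "\<bar>rr n\<bar> * \<bar>u n * g2 n - w n * g1 n\<bar> \<le> \<bar>rr n\<bar> * (2 * \<eta>)" by (intro mult_left_mono) auto
          have "- (2 * rr n * (u n * g2 n - w n * g1 n)) \<le> 2 * (\<bar>rr n\<bar> * \<bar>u n * g2 n - w n * g1 n\<bar>)"
          proof -
            have "- (rr n * (u n * g2 n - w n * g1 n)) \<le> \<bar>rr n * (u n * g2 n - w n * g1 n)\<bar>" by (rule abs_ge_minus_self)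
            then show ?thesis by (simp add: abs_mult)
          qed
          also have "\<dots> \<le> 2 * (\<bar>rr n\<bar> * (2 * \<eta>))" using F1 by (rule mult_left_mono) simp
          also have "\<dots> = 2 * \<bar>rr n\<bar> * (2 * \<eta>)" by (simp only: mult.assoc)
          finally show ?thesis .
        qed
        ultimately show "2 * \<mu> * (u n * g1 n + w n * g2 n) - 2 * rr n * (u n * g2 n - w n * g1 n)
            \<le> (4 * \<mu> + 4 * \<bar>rr n\<bar>) * \<eta>" by (simp add: algebra_simps)
      qed
      then show ?thesis using uw by simp
    qed
    also have "(\<Sum>n\<in>I. (4 * \<mu> + 4 * \<bar>rr n\<bar>) * \<eta>) = E1 * \<eta>" by (simp add: E1_def sum_distrib_right)
    also have "E1 * \<eta> \<le> E1 * (\<delta> / (E1 + 1))" by (rule mult_left_mono[OF eta E1nn])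
    also have "E1 * (\<delta> / (E1 + 1)) \<le> \<delta>" using E1nn \<delta> by (simp add: field_simps)
    finally show "\<mu>\<^sup>2 \<le> 3 * Mx + \<delta>" by simp
  qed
  have "\<mu> \<le> pi / \<gamma>"
  proof (rule power2_le_imp_le)
    show "\<mu>\<^sup>2 \<le> (pi / \<gamma>)\<^sup>2" using key gpos by (simp add: Mx_def power_divide)
    show "0 \<le> pi / \<gamma>" using gpos by simp
  qed
  then have "\<mu> * Nn u w \<le> (pi / \<gamma>) * Nn u w" using Nn_nonneg by (rule mult_right_mono)
  then show ?thesis using psd[of u w] by linarith
qed



lemma W_bound:
  "(\<Sum>n\<in>I. \<Sum>m\<in>I. v n * v m * sinc (lam n - lam m)) \<ge> (1 - 1 / \<gamma>) * (\<Sum>n\<in>I. (v n)\<^sup>2)"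
proof -
  define S where "S n = sin (pi * lam n)" for n
  define C where "C n = cos (pi * lam n)" for n
  define uu where "uu n = v n * S n" for n
  define ww where "ww n = v n * C n" for n
  have pw: "v n * v m * sinc (lam n - lam m) = (if n = m then (v n)\<^sup>2 else 0)
      + (1 / pi) * (t n m * uu n * ww m - t n m * ww n * uu m)" if "n \<in> I" "m \<in> I" for n m
  proof (cases "n = m")
    case True
    then show ?thesis by (simp add: t_def power2_eq_square)
  next
    case False
    then have d: "lam n - lam m \<noteq> 0" using lam_ne that by auto
    have sd: "sin (pi * (lam n - lam m)) = S n * C m - C n * S m"
      using sin_diff[of "pi * lam n" "pi * lam m"] by (simp add: S_def C_def right_diff_distrib)
    have "v n * v m * sinc (lam n - lam m) = v n * v m * ((S n * C m - C n * S m) / (pi * (lam n - lam m)))"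
      by (simp only: sinc_nz[OF d] sd)
    also have "\<dots> = (if n = m then (v n)\<^sup>2 else 0) + (1 / pi) * (t n m * uu n * ww m - t n m * ww n * uu m)"
    proof -
      have tt: "t n m = 1 / (lam n - lam m)" using False by (simp add: t_def)
      have "(1 / pi) * (1 / (lam n - lam m) * (v n * S n) * (v m * C m) - 1 / (lam n - lam m) * (v n * C n) * (v m * S m))
          = (1 / (pi * (lam n - lam m))) * (v n * v m * (S n * C m - C n * S m))"
        by (simp add: algebra_simps)
      also have "\<dots> = v n * v m * ((S n * C m - C n * S m) / (pi * (lam n - lam m)))"
        by simp
      finally show ?thesis unfolding tt uu_def ww_def using False by simp
    qed
    finally show ?thesis .
  qed
  have "(\<Sum>n\<in>I. \<Sum>m\<in>I. v n * v m * sinc (lam n - lam m)) =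
      (\<Sum>n\<in>I. \<Sum>m\<in>I. (if n = m then (v n)\<^sup>2 else 0) + (1 / pi) * (t n m * uu n * ww m - t n m * ww n * uu m))"
    by (intro sum.cong refl pw)
  also have "\<dots> = (\<Sum>n\<in>I. \<Sum>m\<in>I. (if n = m then (v n)\<^sup>2 else 0)) + (1 / pi) * ((\<Sum>n\<in>I. \<Sum>m\<in>I. t n m * uu n * ww m) - (\<Sum>n\<in>I. \<Sum>m\<in>I. t n m * ww n * uu m))"
    by (simp only: sum.distrib sum_distrib_left[symmetric] sum_subtractf)
  also have "\<dots> = (\<Sum>n\<in>I. (v n)\<^sup>2) + (1 / pi) * ((\<Sum>n\<in>I. uu n * Tv ww n) - (\<Sum>n\<in>I. ww n * Tv uu n))"
  proof -
    have e1: "(\<Sum>n\<in>I. \<Sum>m\<in>I. (if n = m then (v n)\<^sup>2 else 0)) = (\<Sum>n\<in>I. (v n)\<^sup>2)"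
      using finI by (simp add: sum.delta)
    have e2: "(\<Sum>n\<in>I. \<Sum>m\<in>I. t n m * uu n * ww m) = (\<Sum>n\<in>I. uu n * Tv ww n)"
      by (simp add: Tv_def sum_distrib_left mult_ac)
    have e3: "(\<Sum>n\<in>I. \<Sum>m\<in>I. t n m * ww n * uu m) = (\<Sum>n\<in>I. ww n * Tv uu n)"
      by (simp add: Tv_def sum_distrib_left mult_ac)
    show ?thesis unfolding e1 e2 e3 ..
  qed
  also have "\<dots> = (\<Sum>n\<in>I. (v n)\<^sup>2) - (1 / pi) * Phi2 (\<lambda>n. - uu n) ww"
  proof -
    have p: "Phi2 (\<lambda>n. - uu n) ww = - 2 * (\<Sum>n\<in>I. uu n * Tv ww n)" by (simp add: Phi2_def sum_negf)
    have q: "(\<Sum>n\<in>I. uu n * Tv ww n) - (\<Sum>n\<in>I. ww n * Tv uu n) = - Phi2 (\<lambda>n. - uu n) ww"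
      using Tv_adj[of uu ww] p by linarith
    show ?thesis unfolding q by simp
  qed
  finally have W: "(\<Sum>n\<in>I. \<Sum>m\<in>I. v n * v m * sinc (lam n - lam m)) = (\<Sum>n\<in>I. (v n)\<^sup>2) - (1 / pi) * Phi2 (\<lambda>n. - uu n) ww" .
  have N: "Nn (\<lambda>n. - uu n) ww = (\<Sum>n\<in>I. (v n)\<^sup>2)"
  proof -
    have "Nn (\<lambda>n. - uu n) ww = (\<Sum>n\<in>I. (- uu n)\<^sup>2 + (ww n)\<^sup>2)"
      by (simp only: Nn_def sum.distrib)
    also have "\<dots> = (\<Sum>n\<in>I. (v n)\<^sup>2 * ((S n)\<^sup>2 + (C n)\<^sup>2))"
      by (intro sum.cong refl) (simp only: uu_def ww_def power_mult_distrib distrib_left power2_minus)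
    also have "\<dots> = (\<Sum>n\<in>I. (v n)\<^sup>2)" by (simp add: S_def C_def)
    finally show ?thesis .
  qed
  have "(1 / pi) * Phi2 (\<lambda>n. - uu n) ww \<le> (1 / pi) * ((pi / \<gamma>) * Nn (\<lambda>n. - uu n) ww)"
    by (intro mult_left_mono MV_upper) simp
  also have "\<dots> = (1 / \<gamma>) * (\<Sum>n\<in>I. (v n)\<^sup>2)" by (simp add: N)
  finally show ?thesis unfolding W by (simp add: algebra_simps)
qed

end

lemma const_ge1: "1 \<le> sqrt (1/3 + pi\<^sup>2/12)"
proof -
  have "3 < pi" by (rule pi_gt3)
  then have "3 * 3 < pi * pi" by (intro mult_strict_mono) auto
  then have "9 < pi\<^sup>2" by (simp add: power2_eq_square)
  then have "1 \<le> 1/3 + pi\<^sup>2/12" by simp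
  then show ?thesis by simp
qed

lemma norm_sq_sum:
  fixes a :: "nat \<Rightarrow> complex" and s :: "nat \<Rightarrow> real"
  shows "(cmod (\<Sum>n\<in>I. a n * complex_of_real (s n)))\<^sup>2 = (\<Sum>n\<in>I. \<Sum>m\<in>I. Re (a n * cnj (a m)) * (s n * s m))"
proof -
  have "complex_of_real ((cmod (\<Sum>n\<in>I. a n * complex_of_real (s n)))\<^sup>2)
      = (\<Sum>n\<in>I. a n * complex_of_real (s n)) * cnj (\<Sum>n\<in>I. a n * complex_of_real (s n))"
    by (rule complex_norm_square)
  also have "\<dots> = (\<Sum>n\<in>I. \<Sum>m\<in>I. (a n * cnj (a m)) * complex_of_real (s n * s m))"
    by (simp add: sum_product cnj_sum mult_ac)
  finally have "(cmod (\<Sum>n\<in>I. a n * complex_of_real (s n)))\<^sup>2 = Re (\<Sum>n\<in>I. \<Sum>m\<in>I. (a n * cnj (a m)) * complex_of_real (s n * s m))"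
    by (metis Re_complex_of_real)
  also have "\<dots> = (\<Sum>n\<in>I. \<Sum>m\<in>I. Re (a n * cnj (a m)) * (s n * s m))"
    by (simp add: Re_sum)
  finally show ?thesis .
qed

theorem theorem1:
  fixes R :: nat and a :: "nat \<Rightarrow> complex" and lam :: "nat \<Rightarrow> real" and \<gamma> :: real
  assumes gamma: "\<gamma> > sqrt (1/3 + pi\<^sup>2/12)"
    and sep: "\<And>n m. n \<in> {1..R} \<Longrightarrow> m \<in> {1..R} \<Longrightarrow> n \<noteq> m \<Longrightarrow> \<bar>lam n - lam m\<bar> \<ge> \<gamma>"
  shows "energy (\<lambda>t. \<Sum>n\<in>{1..R}. a n * complex_of_real (sinc (t - lam n)))
           \<ge> ennreal ((1 - sqrt (1/3 + pi\<^sup>2/12) / \<gamma>) * (\<Sum>n\<in>{1..R}. (cmod (a n))\<^sup>2))"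
proof -
  let ?I = "{1..R}"
  let ?C = "sqrt (1/3 + pi\<^sup>2/12)"
  have C1: "1 \<le> ?C" by (rule const_ge1)
  have gpos: "\<gamma> > 0" using gamma C1 by linarith
  interpret mvs ?I lam \<gamma> using gpos sep by unfold_locales auto
  define Q where "Q = (\<Sum>n\<in>?I. \<Sum>m\<in>?I. Re (a n * cnj (a m)) * sinc (lam n - lam m))"
  define g where "g t = (\<Sum>n\<in>?I. \<Sum>m\<in>?I. Re (a n * cnj (a m)) * (sinc (t - lam n) * sinc (t - lam m)))" for t
  have gI: "integrable lborel g"
    unfolding g_def[abs_def] using sinc_gram by (intro Bochner_Integration.integrable_sum integrable_mult_right) auto
  have gint: "integral\<^sup>L lborel g = Q"
    unfolding g_def[abs_def] Q_def using sinc_gram by (simp add: Bochner_Integration.integral_sum Bochner_Integration.integrable_sum)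
  have en: "energy (\<lambda>t. \<Sum>n\<in>?I. a n * complex_of_real (sinc (t - lam n))) = ennreal Q"
  proof -
    have "energy (\<lambda>t. \<Sum>n\<in>?I. a n * complex_of_real (sinc (t - lam n))) = (\<integral>\<^sup>+ t. ennreal (g t) \<partial>lborel)"
      unfolding energy_def g_def by (simp add: norm_sq_sum)
    also have "\<dots> = ennreal (integral\<^sup>L lborel g)"
    proof (rule nn_integral_eq_integral[OF gI])
      have "g t = (cmod (\<Sum>n\<in>?I. a n * complex_of_real (sinc (t - lam n))))\<^sup>2" for t
        unfolding g_def by (rule norm_sq_sum[symmetric])
      then show "AE t in lborel. 0 \<le> g t" by simp
    qed
    finally show ?thesis by (simp add: gint)
  qed
  have QW: "Q = (\<Sum>n\<in>?I. \<Sum>m\<in>?I. Re (a n) * Re (a m) * sinc (lam n - lam m))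
              + (\<Sum>n\<in>?I. \<Sum>m\<in>?I. Im (a n) * Im (a m) * sinc (lam n - lam m))"
  proof -
    have "Q = (\<Sum>n\<in>?I. \<Sum>m\<in>?I. Re (a n) * Re (a m) * sinc (lam n - lam m) + Im (a n) * Im (a m) * sinc (lam n - lam m))"
      unfolding Q_def by (intro sum.cong refl) (simp add: algebra_simps)
    then show ?thesis by (simp only: sum.distrib)
  qed
  have "(1 - 1 / \<gamma>) * (\<Sum>n\<in>?I. (cmod (a n))\<^sup>2)
     = (1 - 1 / \<gamma>) * (\<Sum>n\<in>?I. (Re (a n))\<^sup>2) + (1 - 1 / \<gamma>) * (\<Sum>n\<in>?I. (Im (a n))\<^sup>2)"
    by (simp add: cmod_power2 sum.distrib algebra_simps)
  also have "\<dots> \<le> Q" unfolding QW by (intro add_mono W_bound)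
  finally have Q1: "(1 - 1 / \<gamma>) * (\<Sum>n\<in>?I. (cmod (a n))\<^sup>2) \<le> Q" .
  have "(1 - ?C / \<gamma>) * (\<Sum>n\<in>?I. (cmod (a n))\<^sup>2) \<le> (1 - 1 / \<gamma>) * (\<Sum>n\<in>?I. (cmod (a n))\<^sup>2)"
  proof (rule mult_right_mono)
    show "1 - ?C / \<gamma> \<le> 1 - 1 / \<gamma>" using C1 gpos by (simp add: divide_right_mono)
  qed (simp add: sum_nonneg)
  then have "(1 - ?C / \<gamma>) * (\<Sum>n\<in>?I. (cmod (a n))\<^sup>2) \<le> Q" using Q1 by linarith
  then show ?thesis unfolding en by (rule ennreal_leI)
qed

end
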